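(* Let $\{GM_n\}$ be the Gaussian Tetranacci numbers and $\{GR_n\}$ the Gaussian Tetranacci-Lucas numbers. Then for every integer $n\ge3$: $$(4-i)GM_{2n}-(9-4i)GM_{2n-2}-(6-7i)GM_{2n-4}+(1+i)GM_{2n-6}=(1+i)GR_{2n-2}+(1-i)GR_{2n-4}-iGR_{2n-6},$$ $$(1+4i)GM_{2n}+(4-9i)GM_{2n-2}+(2-6i)GM_{2n-4}+(1+i)GM_{2n-6}=(1+i)GR_{2n-1}+(1-i)GR_{2n-3}-iGR_{2n-5},$$ $$(4-i)GM_{2n+1}-(9-4i)GM_{2n-1}-(6-7i)GM_{2n-3}+(1+i)GM_{2n-5}=GR_{2n}-(1-i)GR_{2n-2}-(1-i)GR_{2n-4},$$ $$(1+4i)GM_{2n+1}+(4-9i)GM_{2n-1}+(2-6i)GM_{2n-3}+(1+i)GM_{2n-5}=GR_{2n+1}-(1-i)GR_{2n-1}-(1-i)GR_{2n-3}.$$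
   Context: The Gaussian Tetranacci numbers: $GM_0=0$, $GM_1=1$, $GM_2=1+i$, $GM_3=2+i$, $GM_n=GM_{n-1}+GM_{n-2}+GM_{n-3}+GM_{n-4}$ for $n\ge4$. The Gaussian Tetranacci-Lucas numbers: $GR_0=4-i$, $GR_1=1+4i$, $GR_2=3+i$, $GR_3=7+3i$, $GR_n=GR_{n-1}+GR_{n-2}+GR_{n-3}+GR_{n-4}$ for $n\ge4$. *)

theory Defs
  imports Complex_Main
begin

fun GM :: "nat \<Rightarrow> complex" where
  "GM 0 = 0"
| "GM (Suc 0) = 1"
| "GM (Suc (Suc 0)) = 1 + \<i>"
| "GM (Suc (Suc (Suc 0))) = 2 + \<i>"
| "GM (Suc (Suc (Suc (Suc n)))) =
     GM (Suc (Suc (Suc n))) + GM (Suc (Suc n)) + GM (Suc n) + GM n"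

fun GR :: "nat \<Rightarrow> complex" where
  "GR 0 = 4 - \<i>"
| "GR (Suc 0) = 1 + 4 * \<i>"
| "GR (Suc (Suc 0)) = 3 + \<i>"
| "GR (Suc (Suc (Suc 0))) = 7 + 3 * \<i>"
| "GR (Suc (Suc (Suc (Suc n)))) =
     GR (Suc (Suc (Suc n))) + GR (Suc (Suc n)) + GR (Suc n) + GR n"

end

theory Submission
  imports Defs
begin

lemma tet_zero:
  fixes f :: "nat \<Rightarrow> complex"
  assumes r: "\<And>k. f (k+4) = f (k+3) + f (k+2) + f (k+1) + f k"
    and "f 0 = 0" "f 1 = 0" "f 2 = 0" "f 3 = 0"
  shows "f k = 0"
proof (induction k rule: less_induct)
  case (less k)
  show ?case
  proof (cases "k \<ge> 4")
    case True
    then obtain j where j: "k = j + 4" by (metis add.commute le_Suc_ex)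
    show ?thesis using less[of j] less[of "j+1"] less[of "j+2"] less[of "j+3"] r[of j] j by simp
  next
    case False
    then have "k = 0 \<or> k = 1 \<or> k = 2 \<or> k = 3" by auto
    then show ?thesis using assms by auto
  qed
qed

lemma GM_rec: "GM (k+4) = GM (k+3) + GM (k+2) + GM (k+1) + GM k"
  by (simp add: numeral_eq_Suc)
lemma GR_rec: "GR (k+4) = GR (k+3) + GR (k+2) + GR (k+1) + GR k"
  by (simp add: numeral_eq_Suc)

lemma GM_num: "4 \<le> (numeral n::nat) \<Longrightarrow> GM (k + numeral n) = GM (k + (numeral n - 1)) + GM (k + (numeral n - 2)) + GM (k + (numeral n - 3)) + GM (k + (numeral n - 4))"
proof -
  assume h: "4 \<le> (numeral n::nat)"
  obtain j where j: "numeral n = j + (4::nat)" using h by (metis add.commute le_Suc_ex)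
  show ?thesis unfolding j using GM_rec[of "k + j"] by (simp add: algebra_simps)
qed
lemma GR_num: "4 \<le> (numeral n::nat) \<Longrightarrow> GR (k + numeral n) = GR (k + (numeral n - 1)) + GR (k + (numeral n - 2)) + GR (k + (numeral n - 3)) + GR (k + (numeral n - 4))"
proof -
  assume h: "4 \<le> (numeral n::nat)"
  obtain j where j: "numeral n = j + (4::nat)" using h by (metis add.commute le_Suc_ex)
  show ?thesis unfolding j using GR_rec[of "k + j"] by (simp add: algebra_simps)
qed

lemma id1: "(4 - \<i>) * GM (k+6) - (9 - 4*\<i>) * GM (k+4) - (6 - 7*\<i>) * GM (k+2) + (1 + \<i>) * GM k
   = (1 + \<i>) * GR (k+4) + (1 - \<i>) * GR (k+2) - \<i> * GR k"
proof -
  let ?f = "\<lambda>k. (4 - \<i>) * GM (k+6) - (9 - 4*\<i>) * GM (k+4) - (6 - 7*\<i>) * GM (k+2) + (1 + \<i>) * GM k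
   - ((1 + \<i>) * GR (k+4) + (1 - \<i>) * GR (k+2) - \<i> * GR k)"
  have "?f k = 0"
  proof (rule tet_zero[where f = ?f])
    fix k show "?f (k+4) = ?f (k+3) + ?f (k+2) + ?f (k+1) + ?f k"
      by (simp add: GM_num GR_num algebra_simps) (simp add: numeral_eq_Suc algebra_simps)
  qed (simp_all add: numeral_eq_Suc complex_eq_iff)
  then show ?thesis by simp
qed

lemma id2: "(1 + 4*\<i>) * GM (k+6) + (4 - 9*\<i>) * GM (k+4) + (2 - 6*\<i>) * GM (k+2) + (1 + \<i>) * GM k
   = (1 + \<i>) * GR (k+5) + (1 - \<i>) * GR (k+3) - \<i> * GR (k+1)"
proof -
  let ?f = "\<lambda>k. (1 + 4*\<i>) * GM (k+6) + (4 - 9*\<i>) * GM (k+4) + (2 - 6*\<i>) * GM (k+2) + (1 + \<i>) * GM k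
   - ((1 + \<i>) * GR (k+5) + (1 - \<i>) * GR (k+3) - \<i> * GR (k+1))"
  have "?f k = 0"
  proof (rule tet_zero[where f = ?f])
    fix k show "?f (k+4) = ?f (k+3) + ?f (k+2) + ?f (k+1) + ?f k"
      by (simp add: GM_num GR_num algebra_simps) (simp add: numeral_eq_Suc algebra_simps)
  qed (simp_all add: numeral_eq_Suc complex_eq_iff)
  then show ?thesis by simp
qed

lemma id3: "(4 - \<i>) * GM (k+6) - (9 - 4*\<i>) * GM (k+4) - (6 - 7*\<i>) * GM (k+2) + (1 + \<i>) * GM k
   = GR (k+5) - (1 - \<i>) * GR (k+3) - (1 - \<i>) * GR (k+1)"
proof -
  let ?f = "\<lambda>k. (4 - \<i>) * GM (k+6) - (9 - 4*\<i>) * GM (k+4) - (6 - 7*\<i>) * GM (k+2) + (1 + \<i>) * GM k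
   - (GR (k+5) - (1 - \<i>) * GR (k+3) - (1 - \<i>) * GR (k+1))"
  have "?f k = 0"
  proof (rule tet_zero[where f = ?f])
    fix k show "?f (k+4) = ?f (k+3) + ?f (k+2) + ?f (k+1) + ?f k"
      by (simp add: GM_num GR_num algebra_simps) (simp add: numeral_eq_Suc algebra_simps)
  qed (simp_all add: numeral_eq_Suc complex_eq_iff)
  then show ?thesis by simp
qed

lemma id4: "(1 + 4*\<i>) * GM (k+6) + (4 - 9*\<i>) * GM (k+4) + (2 - 6*\<i>) * GM (k+2) + (1 + \<i>) * GM k
   = GR (k+6) - (1 - \<i>) * GR (k+4) - (1 - \<i>) * GR (k+2)"
proof -
  let ?f = "\<lambda>k. (1 + 4*\<i>) * GM (k+6) + (4 - 9*\<i>) * GM (k+4) + (2 - 6*\<i>) * GM (k+2) + (1 + \<i>) * GM k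
   - (GR (k+6) - (1 - \<i>) * GR (k+4) - (1 - \<i>) * GR (k+2))"
  have "?f k = 0"
  proof (rule tet_zero[where f = ?f])
    fix k show "?f (k+4) = ?f (k+3) + ?f (k+2) + ?f (k+1) + ?f k"
      by (simp add: GM_num GR_num algebra_simps) (simp add: numeral_eq_Suc algebra_simps)
  qed (simp_all add: numeral_eq_Suc complex_eq_iff)
  then show ?thesis by simp
qed

theorem mainTheorem19:
  fixes n :: nat
  assumes "n \<ge> 3"
  shows "((4 - \<i>) * GM (2*n) - (9 - 4*\<i>) * GM (2*n - 2) - (6 - 7*\<i>) * GM (2*n - 4)
           + (1 + \<i>) * GM (2*n - 6)
         = (1 + \<i>) * GR (2*n - 2) + (1 - \<i>) * GR (2*n - 4) - \<i> * GR (2*n - 6)) \<and>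
      ((1 + 4*\<i>) * GM (2*n) + (4 - 9*\<i>) * GM (2*n - 2) + (2 - 6*\<i>) * GM (2*n - 4)
           + (1 + \<i>) * GM (2*n - 6)
         = (1 + \<i>) * GR (2*n - 1) + (1 - \<i>) * GR (2*n - 3) - \<i> * GR (2*n - 5)) \<and>
      ((4 - \<i>) * GM (2*n + 1) - (9 - 4*\<i>) * GM (2*n - 1) - (6 - 7*\<i>) * GM (2*n - 3)
           + (1 + \<i>) * GM (2*n - 5)
         = GR (2*n) - (1 - \<i>) * GR (2*n - 2) - (1 - \<i>) * GR (2*n - 4)) \<and>
      ((1 + 4*\<i>) * GM (2*n + 1) + (4 - 9*\<i>) * GM (2*n - 1) + (2 - 6*\<i>) * GM (2*n - 3)
           + (1 + \<i>) * GM (2*n - 5)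
         = GR (2*n + 1) - (1 - \<i>) * GR (2*n - 1) - (1 - \<i>) * GR (2*n - 3))"
proof -
  define k where "k = 2*n - 6"
  have k: "2*n = k + 6" using assms unfolding k_def by simp
  have e: "2*n - 2 = k+4" "2*n - 4 = k+2" "2*n - 6 = k" "2*n - 1 = k+5" "2*n - 3 = k+3" "2*n - 5 = k+1"
    "k+1+6 = k+7" "k+1+5 = k+6" "k+1+4 = k+5" "k+1+3 = k+4" "k+1+2 = k+3" "k+1+1 = k+2"
    using k by auto
  have a: "2*n = k+6" "2*n+1 = k+7" using k by auto
  show ?thesis unfolding e(1-6) unfolding a(2) unfolding a(1) using id1[of k] id2[of k] id3[of "k+1"] id4[of "k+1"] unfolding e(7-12) by blast
qed

end
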